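(* Let $\omega$ be a rectilinearly-convex obstacle that is a rectangle (i.e. has exactly four extreme corners). Then $\{d\}$ is a minimum skeleton for $\omega$, where $d$ is either of the two diagonals of $\omega$.
   Context: An obstacle $\omega$ is a simple polygon in $\mathbb{R}^2$ (a closed, bounded polygonal region without holes whose boundary does not intersect itself), assumed in general position (no three of its vertices are collinear); vertices and edges of $\omega$ are those of its boundary. $\omega$ is rectilinear if each edge is horizontal or vertical, and a rectilinear obstacle is rectilinearly-convex if any two points of $\omega$ can be joined by a shortest rectilinear path (made of horizontal and vertical segments, of minimum $\ell_1$ length) contained in $\omega$. A corner point of a rectilinear path is a point where a horizontal and a vertical segment of the path meet. A set $S$ of closed line segments is inside $\omega$ if the union of its elements is contained in $\omega$. Such an $S$ is a skeleton for $\omega$ if for every pair of points $p,q$ not in the interior of $\omega$ such that every shortest rectilinear path between $p$ and $q$ with at most one corner point meets the interior of $\omega$, each such path intersects some element of $S$; a minimum skeleton is one with the fewest segments. $B(\omega)$ is the smallest closed axis-parallel rectangle containing $\omega$; the extreme edges are the edges of $\omega$ lying on the boundary of $B(\omega)$; an extreme corner is a vertex of $\omega$ that is a common endpoint of two extreme edges. A diagonal of $\omega$ is a line segment contained in $\omega$ joining two diagonally opposite extreme corners. *)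

theory Defs
  imports "HOL-Analysis.Analysis"
begin

type_synonym pt = "real \<times> real"

definition l1 :: "pt \<Rightarrow> pt \<Rightarrow> real" where
  "l1 u v = \<bar>fst u - fst v\<bar> + \<bar>snd u - snd v\<bar>"

text \<open>A rectilinear path is a polygonal chain given by its list of vertices; consecutive
  vertices are distinct and joined by a horizontal or vertical segment.\<close>
definition axis_step :: "pt \<Rightarrow> pt \<Rightarrow> bool" where
  "axis_step u v \<longleftrightarrow> u \<noteq> v \<and> (fst u = fst v \<or> snd u = snd v)"

definition rpath :: "pt \<Rightarrow> pt \<Rightarrow> pt list \<Rightarrow> bool" where
  "rpath p q vs \<longleftrightarrow> vs \<noteq> [] \<and> hd vs = p \<and> last vs = q \<and>
     (\<forall>i. Suc i < length vs \<longrightarrow> axis_step (vs ! i) (vs ! Suc i))"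

definition rlen :: "pt list \<Rightarrow> real" where
  "rlen vs = (\<Sum>i<length vs - 1. l1 (vs ! i) (vs ! Suc i))"

definition path_set :: "pt list \<Rightarrow> pt set" where
  "path_set vs = set vs \<union> (\<Union>i\<in>{i. Suc i < length vs}. closed_segment (vs ! i) (vs ! Suc i))"

definition shortest_rpath :: "pt \<Rightarrow> pt \<Rightarrow> pt list \<Rightarrow> bool" where
  "shortest_rpath p q vs \<longleftrightarrow> rpath p q vs \<and> (\<forall>ws. rpath p q ws \<longrightarrow> rlen vs \<le> rlen ws)"

definition horiz :: "pt \<Rightarrow> pt \<Rightarrow> bool" where
  "horiz u v \<longleftrightarrow> snd u = snd v"

definition corner_points :: "pt list \<Rightarrow> pt set" where
  "corner_points vs = {vs ! Suc i | i. Suc (Suc i) < length vs \<and>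
       horiz (vs ! i) (vs ! Suc i) \<noteq> horiz (vs ! Suc i) (vs ! Suc (Suc i))}"

definition short_L_path :: "pt \<Rightarrow> pt \<Rightarrow> pt list \<Rightarrow> bool" where
  "short_L_path p q vs \<longleftrightarrow> shortest_rpath p q vs \<and> card (corner_points vs) \<le> 1"

text \<open>Segments are represented by their endpoint pairs.\<close>
definition seg :: "pt \<times> pt \<Rightarrow> pt set" where
  "seg s = closed_segment (fst s) (snd s)"

definition inside :: "(pt \<times> pt) set \<Rightarrow> pt set \<Rightarrow> bool" where
  "inside S \<omega> \<longleftrightarrow> (\<Union>s\<in>S. seg s) \<subseteq> \<omega>"

definition skeleton :: "pt set \<Rightarrow> (pt \<times> pt) set \<Rightarrow> bool" where
  "skeleton \<omega> S \<longleftrightarrow> inside S \<omega> \<and>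
     (\<forall>p q. p \<notin> interior \<omega> \<and> q \<notin> interior \<omega> \<and>
        (\<forall>vs. short_L_path p q vs \<longrightarrow> path_set vs \<inter> interior \<omega> \<noteq> {}) \<longrightarrow>
        (\<forall>vs. short_L_path p q vs \<longrightarrow> (\<exists>s\<in>S. path_set vs \<inter> seg s \<noteq> {})))"

definition minimum_skeleton :: "pt set \<Rightarrow> (pt \<times> pt) set \<Rightarrow> bool" where
  "minimum_skeleton \<omega> S \<longleftrightarrow> finite S \<and> skeleton \<omega> S \<and>
     (\<forall>S'. finite S' \<and> skeleton \<omega> S' \<longrightarrow> card S \<le> card S')"

definition rect :: "real \<Rightarrow> real \<Rightarrow> real \<Rightarrow> real \<Rightarrow> pt set" where
  "rect a b c e = {z. a \<le> fst z \<and> fst z \<le> b \<and> c \<le> snd z \<and> snd z \<le> e}"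

end

theory Submission
  imports Defs "HOL-Analysis.Analysis"
begin


lemma core:
  fixes x1 y1 x2 y2 :: real
  assumes "\<not>(0<x1\<and>x1<1\<and>0<y1\<and>y1<1)" "\<not>(0<x2\<and>x2<1\<and>0<y2\<and>y2<1)"
  and "(0<y1 \<and> y1<1 \<and> min x1 x2 < 1 \<and> 0 < max x1 x2) \<or> (0<x2\<and>x2<1 \<and> min y1 y2 < 1 \<and> 0 < max y1 y2)"
  and "(0<x1\<and>x1<1 \<and> min y1 y2<1 \<and> 0<max y1 y2) \<or> (0<y2\<and>y2<1 \<and> min x1 x2 <1 \<and> 0 < max x1 x2)"
  shows "((0\<le>y1\<and>y1\<le>1 \<and> min x1 x2 \<le> y1 \<and> y1 \<le> max x1 x2) \<or> (0\<le>x2\<and>x2\<le>1 \<and> min y1 y2 \<le> x2 \<and> x2 \<le> max y1 y2))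
       \<and> ((0\<le>x1\<and>x1\<le>1 \<and> min y1 y2 \<le> x1 \<and> x1 \<le> max y1 y2) \<or> (0\<le>y2\<and>y2\<le>1 \<and> min x1 x2 \<le> y2 \<and> y2 \<le> max x1 x2))"
  using assms unfolding min_def max_def by (auto split: if_splits)

lemma seg_h:
  fixes u w z :: pt
  assumes "snd u = snd w"
  shows "z \<in> closed_segment u w \<longleftrightarrow> snd z = snd u \<and> min (fst u) (fst w) \<le> fst z \<and> fst z \<le> max (fst u) (fst w)"
proof -
  obtain u1 u2 w1 where u: "u = (u1,u2)" "w = (w1,u2)" using assms by (metis prod.collapse)
  obtain z1 z2 where z: "z = (z1,z2)" by fastforce
  have "z \<in> closed_segment u w \<longleftrightarrow> z2 = u2 \<and> z1 \<in> closed_segment u1 w1"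
    unfolding u z in_segment by (auto simp: algebra_simps)
  then show ?thesis using u z by (auto simp: closed_segment_eq_real_ivl)
qed

lemma seg_v:
  fixes u w z :: pt
  assumes "fst u = fst w"
  shows "z \<in> closed_segment u w \<longleftrightarrow> fst z = fst u \<and> min (snd u) (snd w) \<le> snd z \<and> snd z \<le> max (snd u) (snd w)"
proof -
  obtain u1 u2 w2 where u: "u = (u1,u2)" "w = (u1,w2)" using assms by (metis prod.collapse)
  obtain z1 z2 where z: "z = (z1,z2)" by fastforce
  have "z \<in> closed_segment u w \<longleftrightarrow> z1 = u1 \<and> z2 \<in> closed_segment u2 w2"
    unfolding u z in_segment by (auto simp: algebra_simps)
  then show ?thesis using u z by (auto simp: closed_segment_eq_real_ivl)
qed

lemma rect_eq: "rect a b c e = {a..b} \<times> {c..e}"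
  unfolding rect_def by auto

lemma int_rect: "interior (rect a b c e) = {a<..<b} \<times> {c<..<e}"
  unfolding rect_eq interior_Times by simp

lemma l1_nonneg: "0 \<le> l1 u v" unfolding l1_def by simp
lemma l1_tri: "l1 u w \<le> l1 u v + l1 v w" unfolding l1_def by linarith
lemma l1_pos: "u \<noteq> v \<Longrightarrow> 0 < l1 u v"
  unfolding l1_def by (cases u; cases v) auto
lemma l1_sym: "l1 u v = l1 v u" unfolding l1_def by linarith

lemma l1_chain:
  assumes "j \<le> k"
  shows "l1 (vs!j) (vs!k) \<le> (\<Sum>i\<in>{j..<k}. l1 (vs!i) (vs!Suc i))"
  using assms
proof (induction k)
  case 0 then show ?case by (simp add: l1_def)
next
  case (Suc k)
  show ?case
  proof (cases "j = Suc k")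
    case True then show ?thesis by (simp add: l1_def)
  next
    case False
    then have "j \<le> k" using Suc by simp
    then have "l1 (vs!j) (vs!Suc k) \<le> (\<Sum>i\<in>{j..<k}. l1 (vs!i) (vs!Suc i)) + l1 (vs!k) (vs!Suc k)"
      using Suc.IH l1_tri[of "vs!j" "vs!Suc k" "vs!k"] by linarith
    then show ?thesis using \<open>j \<le> k\<close> by simp
  qed
qed

lemma rlen_ge:
  assumes "rpath p q vs"
  shows "l1 p q \<le> rlen vs"
proof -
  have ne: "vs \<noteq> []" and hd: "hd vs = p" and la: "last vs = q" using assms unfolding rpath_def by auto
  have "p = vs!0" using ne hd by (simp add: hd_conv_nth)
  moreover have "q = vs!(length vs - 1)" using ne la by (simp add: last_conv_nth)
  ultimately show ?thesis unfolding rlen_def using l1_chain[of 0 "length vs - 1" vs]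
    by (simp add: atLeast0LessThan)
qed

lemma rlen_nonneg: "0 \<le> rlen vs" unfolding rlen_def by (simp add: sum_nonneg l1_nonneg)

definition Lp :: "pt \<Rightarrow> pt \<Rightarrow> pt \<Rightarrow> pt list" where
  "Lp p k q = (if k = p \<or> k = q then (if p = q then [p] else [p,q]) else [p,k,q])"

lemma Lp_props:
  assumes k: "(fst k = fst q \<and> snd k = snd p) \<or> (fst k = fst p \<and> snd k = snd q)"
  shows "short_L_path p q (Lp p k q)" and "path_set (Lp p k q) = closed_segment p k \<union> closed_segment k q"
proof -
  have lk: "l1 p k + l1 k q = l1 p q" using k unfolding l1_def by auto
  have ps3: "path_set [p,k,q] = closed_segment p k \<union> closed_segment k q"
  proof -
    have "{i. Suc i < length [p,k,q]} = {0,1}" by auto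
    then show ?thesis unfolding path_set_def by auto
  qed
  have ps2: "path_set [p,q] = closed_segment p q"
  proof -
    have "{i. Suc i < length [p,q]} = {0}" by auto
    then show ?thesis unfolding path_set_def by auto
  qed
  have ps1: "path_set [p] = {p}" unfolding path_set_def by auto
  have cp2: "corner_points [u,v] = {}" for u v :: pt unfolding corner_points_def by auto
  have cp1: "corner_points [u] = {}" for u :: pt unfolding corner_points_def by auto
  have cp3: "corner_points [u,v,w] \<subseteq> {v}" for u v w :: pt unfolding corner_points_def
  proof
    fix x assume "x \<in> {[u,v,w] ! Suc i |i. Suc (Suc i) < length [u,v,w] \<and>
        horiz ([u,v,w] ! i) ([u,v,w] ! Suc i) \<noteq> horiz ([u,v,w] ! Suc i) ([u,v,w] ! Suc (Suc i))}"
    then obtain i where "x = [u,v,w] ! Suc i" "Suc (Suc i) < 3" by auto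
    then have "i = 0" by simp
    then show "x \<in> {v}" using \<open>x = _\<close> by simp
  qed
  have sh: "shortest_rpath p q vs" if "rpath p q vs" "rlen vs = l1 p q" for vs
    unfolding shortest_rpath_def using that rlen_ge by auto
  have main: "short_L_path p q (Lp p k q) \<and> path_set (Lp p k q) = closed_segment p k \<union> closed_segment k q"
  proof (cases "k = p \<or> k = q")
    case True
    show ?thesis
    proof (cases "p = q")
      case True
      then have "k = p" using \<open>k = p \<or> k = q\<close> by auto
      have "rpath p q [p]" unfolding rpath_def using True by auto
      moreover have "rlen [p] = l1 p q" unfolding rlen_def using True by (simp add: l1_def)
      ultimately show ?thesis unfolding Lp_def short_L_path_def using True \<open>k = p\<close> sh cp1 ps1 by auto
    next
      case False
      have ax: "axis_step p q" unfolding axis_step_def using False k True by auto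
      have "rpath p q [p,q]" unfolding rpath_def using ax
        by (auto simp: less_Suc_eq nth_Cons split: nat.splits)
      moreover have "rlen [p,q] = l1 p q" unfolding rlen_def by simp
      moreover have "closed_segment p k \<union> closed_segment k q = closed_segment p q"
        using True by auto
      ultimately show ?thesis unfolding Lp_def short_L_path_def using True False sh cp2 ps2 by auto
    qed
  next
    case False
    have ax1: "axis_step p k" "axis_step k q" unfolding axis_step_def using False k by auto
    have "rpath p q [p,k,q]" unfolding rpath_def using ax1
      by (auto simp: less_Suc_eq nth_Cons split: nat.splits)
    moreover have "rlen [p,k,q] = l1 p q" unfolding rlen_def using lk
      by (simp add: numeral_3_eq_3 lessThan_Suc)
    moreover have "card (corner_points [p,k,q]) \<le> 1"
      using card_mono[OF _ cp3[of p k q]] by simp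
    ultimately show ?thesis unfolding Lp_def short_L_path_def using False sh ps3 by auto
  qed
  then show "short_L_path p q (Lp p k q)" "path_set (Lp p k q) = closed_segment p k \<union> closed_segment k q"
    by auto
qed


lemma rpath_ends:
  assumes "rpath p q vs"
  shows "vs \<noteq> []" "vs!0 = p" "vs!(length vs - 1) = q"
  using assms unfolding rpath_def by (auto simp: hd_conv_nth last_conv_nth)

lemma short_len:
  assumes "short_L_path p q vs" shows "rlen vs = l1 p q"
proof -
  let ?k = "(fst q, snd p)"
  have "short_L_path p q (Lp p ?k q)" by (rule Lp_props(1)) simp
  then have "rlen vs \<le> rlen (Lp p ?k q)" "rpath p q (Lp p ?k q)" "rpath p q vs"
    using assms unfolding short_L_path_def shortest_rpath_def by auto
  moreover have "rlen (Lp p ?k q) = l1 p q"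
  proof -
    have "l1 p ?k + l1 ?k q = l1 p q" unfolding l1_def by simp
    then show ?thesis unfolding Lp_def rlen_def
      by (auto simp: numeral_3_eq_3 lessThan_Suc l1_def)
  qed
  ultimately show ?thesis using rlen_ge[OF \<open>rpath p q vs\<close>] by linarith
qed

lemma short_distinct:
  assumes "short_L_path p q vs" "i < j" "j < length vs"
  shows "vs!i \<noteq> vs!j"
proof
  assume eq: "vs!i = vs!j"
  let ?t = "\<lambda>i. l1 (vs!i) (vs!Suc i)"
  let ?n = "length vs"
  have rp: "rpath p q vs" using assms(1) unfolding short_L_path_def shortest_rpath_def by auto
  note ends = rpath_ends[OF rp]
  have rl: "rlen vs = l1 p q" by (rule short_len[OF assms(1)])
  have split: "sum ?t {0..<?n-1} = sum ?t {0..<i} + sum ?t {i..<j} + sum ?t {j..<?n-1}"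
    using assms by (simp add: sum.atLeastLessThan_concat)
  have "vs!i \<noteq> vs!Suc i" using rp assms unfolding rpath_def axis_step_def by auto
  then have "0 < ?t i" by (rule l1_pos)
  moreover have "?t i \<le> sum ?t {i..<j}"
    by (rule member_le_sum) (use assms in \<open>auto simp: l1_nonneg\<close>)
  moreover have "l1 p (vs!i) \<le> sum ?t {0..<i}" using l1_chain[of 0 i vs] ends by simp
  moreover have "l1 (vs!j) q \<le> sum ?t {j..<?n-1}" using l1_chain[of j "?n-1" vs] ends assms by simp
  moreover have "l1 p q \<le> l1 p (vs!i) + l1 (vs!j) q" using eq l1_tri by metis
  moreover have "rlen vs = sum ?t {0..<?n-1}" unfolding rlen_def by (simp add: atLeast0LessThan)
  ultimately show False using rl split by linarith
qed

lemma const_run: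
  assumes "\<forall>i. l \<le> i \<longrightarrow> i < r \<longrightarrow> h i = h (Suc i)" "l \<le> i" "i \<le> r"
  shows "h i = (h l :: bool)"
  using assms(2,3)
proof (induction i)
  case 0 then show ?case by simp
next
  case (Suc i)
  show ?case
  proof (cases "l = Suc i")
    case False
    then have "l \<le> i" using Suc by simp
    then show ?thesis using Suc assms(1) by force
  qed simp
qed

lemma path_shape:
  assumes "short_L_path p q vs"
  shows "\<exists>j<length vs. ((\<forall>i<j. snd (vs!i) = snd (vs!Suc i)) \<and> (\<forall>i. j \<le> i \<longrightarrow> Suc i < length vs \<longrightarrow> fst (vs!i) = fst (vs!Suc i)))
     \<or> ((\<forall>i<j. fst (vs!i) = fst (vs!Suc i)) \<and> (\<forall>i. j \<le> i \<longrightarrow> Suc i < length vs \<longrightarrow> snd (vs!i) = snd (vs!Suc i)))"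
proof -
  let ?n = "length vs"
  define h where "h i = horiz (vs!i) (vs!Suc i)" for i
  have rp: "rpath p q vs" using assms(1) unfolding short_L_path_def shortest_rpath_def by auto
  have ne: "?n \<ge> 1" using rpath_ends[OF rp] by (cases vs) auto
  have hv: "h i \<Longrightarrow> snd (vs!i) = snd (vs!Suc i)" for i unfolding h_def horiz_def by simp
  have vv: "\<not> h i \<Longrightarrow> Suc i < ?n \<Longrightarrow> fst (vs!i) = fst (vs!Suc i)" for i
    using rp unfolding h_def horiz_def rpath_def axis_step_def by auto
  define C where "C = {i. Suc (Suc i) < ?n \<and> h i \<noteq> h (Suc i)}"
  have cpC: "corner_points vs = (\<lambda>i. vs!Suc i) ` C" unfolding corner_points_def C_def h_def by blast
  have nC: "h i = h (Suc i)" if "i \<notin> C" "Suc (Suc i) < ?n" for i using that unfolding C_def by blast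
  have fC: "finite C" unfolding C_def by (rule finite_subset[of _ "{..<?n}"]) auto
  have inj: "inj_on (\<lambda>i. vs!Suc i) C"
  proof (rule inj_onI)
    fix x y assume "x \<in> C" "y \<in> C" "vs!Suc x = vs!Suc y"
    then have xy: "Suc x < ?n" "Suc y < ?n" "vs!Suc x = vs!Suc y" unfolding C_def by auto
    show "x = y"
    proof (rule ccontr)
      assume "x \<noteq> y"
      then consider "x < y" | "y < x" by linarith
      then show False
      proof cases
        case 1 then show False using short_distinct[OF assms, of "Suc x" "Suc y"] xy by simp
      next
        case 2 then show False using short_distinct[OF assms, of "Suc y" "Suc x"] xy by simp
      qed
    qed
  qed
  have "card C \<le> 1" using assms unfolding short_L_path_def cpC card_image[OF inj] by simp
  then have "card C = 0 \<or> card C = 1" by linarith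
  then have Ccases: "C = {} \<or> (\<exists>k. C = {k})" using fC card_1_singleton_iff[of C] by auto
  have fin: "\<exists>j<?n. ((\<forall>i<j. h i) \<and> (\<forall>i. j \<le> i \<longrightarrow> Suc i < ?n \<longrightarrow> \<not> h i)) \<or>
                    ((\<forall>i<j. \<not> h i) \<and> (\<forall>i. j \<le> i \<longrightarrow> Suc i < ?n \<longrightarrow> h i))"
  proof (cases "C = {}")
    case True
    have st: "\<forall>i. 0 \<le> i \<longrightarrow> i < ?n - 2 \<longrightarrow> h i = h (Suc i)"
    proof (intro allI impI)
      fix i assume "i < ?n - 2" then show "h i = h (Suc i)" using nC[of i] True by simp
    qed
    have "h i = h 0" if "Suc i < ?n" for i
      by (rule const_run[OF st]) (use that in simp_all)
    then have hc: "\<And>i. Suc i < ?n \<Longrightarrow> h i = h 0" .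
    show ?thesis
    proof (cases "h 0")
      case True
      have "\<forall>i<?n-1. h i"
      proof (intro allI impI)
        fix i assume "i < ?n - 1"
        then have "Suc i < ?n" by simp
        then show "h i" using hc[of i] True by simp
      qed
      moreover have "\<forall>i. ?n - 1 \<le> i \<longrightarrow> Suc i < ?n \<longrightarrow> \<not> h i" by (intro allI impI) arith
      ultimately show ?thesis using ne by (intro exI[of _ "?n - 1"]) (simp only: diff_less zero_less_one, simp)
    next
      case False
      have "\<forall>i<?n-1. \<not> h i"
      proof (intro allI impI)
        fix i assume "i < ?n - 1"
        then have "Suc i < ?n" by simp
        then show "\<not> h i" using hc[of i] False by simp
      qed
      moreover have "\<forall>i. ?n - 1 \<le> i \<longrightarrow> Suc i < ?n \<longrightarrow> h i" by (intro allI impI) arith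
      ultimately show ?thesis using ne by (intro exI[of _ "?n - 1"]) (simp only: diff_less zero_less_one, simp)
    qed
  next
    case False
    then obtain k where k: "C = {k}" using Ccases by auto
    then have "k \<in> C" by simp
    then have kn: "Suc (Suc k) < ?n" "h k \<noteq> h (Suc k)" unfolding C_def by auto
    have stA: "\<forall>i. 0 \<le> i \<longrightarrow> i < k \<longrightarrow> h i = h (Suc i)"
    proof (intro allI impI)
      fix i assume "i < k" then show "h i = h (Suc i)" using nC[of i] k kn by simp
    qed
    have A: "h i = h 0" if "i \<le> k" for i
      by (rule const_run[OF stA]) (use that in simp_all)
    have stB: "\<forall>i. Suc k \<le> i \<longrightarrow> i < ?n - 2 \<longrightarrow> h i = h (Suc i)"
    proof (intro allI impI)
      fix i assume "Suc k \<le> i" "i < ?n - 2" then show "h i = h (Suc i)" using nC[of i] k by simp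
    qed
    have B: "h i = h (Suc k)" if "Suc k \<le> i" "Suc i < ?n" for i
      by (rule const_run[OF stB]) (use that in simp_all)
    have hk: "h (Suc k) = (\<not> h 0)" using A[of k] kn by auto
    have sk: "Suc k < ?n" using kn by simp
    show ?thesis
    proof (cases "h 0")
      case True
      have "\<forall>i<Suc k. h i"
      proof (intro allI impI)
        fix i assume "i < Suc k" then show "h i" using A[of i] True by simp
      qed
      moreover have "\<forall>i. Suc k \<le> i \<longrightarrow> Suc i < ?n \<longrightarrow> \<not> h i"
      proof (intro allI impI)
        fix i assume "Suc k \<le> i" "Suc i < ?n" then show "\<not> h i" using B[of i] hk True by simp
      qed
      ultimately show ?thesis using sk by blast
    next
      case False
      have "\<forall>i<Suc k. \<not> h i"
      proof (intro allI impI)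
        fix i assume "i < Suc k" then show "\<not> h i" using A[of i] False by simp
      qed
      moreover have "\<forall>i. Suc k \<le> i \<longrightarrow> Suc i < ?n \<longrightarrow> h i"
      proof (intro allI impI)
        fix i assume "Suc k \<le> i" "Suc i < ?n" then show "h i" using B[of i] hk False by simp
      qed
      ultimately show ?thesis using sk by blast
    qed
  qed
  then obtain j where j: "j < ?n" "((\<forall>i<j. h i) \<and> (\<forall>i. j \<le> i \<longrightarrow> Suc i < ?n \<longrightarrow> \<not> h i)) \<or>
                    ((\<forall>i<j. \<not> h i) \<and> (\<forall>i. j \<le> i \<longrightarrow> Suc i < ?n \<longrightarrow> h i))" by blast
  have jn: "i < j \<Longrightarrow> Suc i < ?n" for i using j(1) by simp
  from j(2) show ?thesis
  proof
    assume a: "(\<forall>i<j. h i) \<and> (\<forall>i. j \<le> i \<longrightarrow> Suc i < ?n \<longrightarrow> \<not> h i)"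
    have "\<forall>i<j. snd (vs!i) = snd (vs!Suc i)" using a hv by simp
    moreover have "\<forall>i. j \<le> i \<longrightarrow> Suc i < ?n \<longrightarrow> fst (vs!i) = fst (vs!Suc i)" using a vv by simp
    ultimately show ?thesis using j(1) by blast
  next
    assume a: "(\<forall>i<j. \<not> h i) \<and> (\<forall>i. j \<le> i \<longrightarrow> Suc i < ?n \<longrightarrow> h i)"
    have "\<forall>i<j. fst (vs!i) = fst (vs!Suc i)" using a vv jn by simp
    moreover have "\<forall>i. j \<le> i \<longrightarrow> Suc i < ?n \<longrightarrow> snd (vs!i) = snd (vs!Suc i)" using a hv by simp
    ultimately show ?thesis using j(1) by blast
  qed
qed


lemma seg_in_path: "Suc i < length vs \<Longrightarrow> closed_segment (vs!i) (vs!Suc i) \<subseteq> path_set vs"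
  unfolding path_set_def by blast

lemma pt_in_path: "i < length vs \<Longrightarrow> vs!i \<in> path_set vs"
  unfolding path_set_def by simp

lemma cover_h:
  assumes "\<forall>i. j0 \<le> i \<longrightarrow> i < j1 \<longrightarrow> snd (vs!i) = snd (vs!Suc i)" "j0 \<le> j1" "j1 < length vs"
  shows "snd (vs!j1) = snd (vs!j0) \<and> closed_segment (vs!j0) (vs!j1) \<subseteq> path_set vs"
  using assms
proof (induction j1)
  case 0 then show ?case using pt_in_path[of 0 vs] by simp
next
  case (Suc m)
  show ?case
  proof (cases "j0 = Suc m")
    case True then show ?thesis using pt_in_path[of "Suc m" vs] Suc.prems by simp
  next
    case False
    then have m: "j0 \<le> m" "m < length vs" using Suc.prems by auto
    have pm: "\<forall>i. j0 \<le> i \<longrightarrow> i < m \<longrightarrow> snd (vs!i) = snd (vs!Suc i)" using Suc.prems(1) by simp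
    have ih: "snd (vs!m) = snd (vs!j0)" "closed_segment (vs!j0) (vs!m) \<subseteq> path_set vs" using Suc.IH[OF pm m] by auto
    have sm: "snd (vs!Suc m) = snd (vs!m)" using Suc.prems(1) m by simp
    have s2: "closed_segment (vs!m) (vs!Suc m) \<subseteq> path_set vs" using seg_in_path[of m vs] Suc.prems by simp
    have "closed_segment (vs!j0) (vs!Suc m) \<subseteq> closed_segment (vs!j0) (vs!m) \<union> closed_segment (vs!m) (vs!Suc m)"
    proof
      fix z assume "z \<in> closed_segment (vs!j0) (vs!Suc m)"
      then have "snd z = snd (vs!j0) \<and> min (fst (vs!j0)) (fst (vs!Suc m)) \<le> fst z \<and> fst z \<le> max (fst (vs!j0)) (fst (vs!Suc m))"
        using seg_h[of "vs!j0" "vs!Suc m" z] ih sm by simp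
      then show "z \<in> closed_segment (vs!j0) (vs!m) \<union> closed_segment (vs!m) (vs!Suc m)"
        using seg_h[of "vs!j0" "vs!m" z] seg_h[of "vs!m" "vs!Suc m" z] ih sm
        unfolding min_def max_def by (auto split: if_splits)
    qed
    then show ?thesis using ih sm s2 by auto
  qed
qed

lemma cover_v:
  assumes "\<forall>i. j0 \<le> i \<longrightarrow> i < j1 \<longrightarrow> fst (vs!i) = fst (vs!Suc i)" "j0 \<le> j1" "j1 < length vs"
  shows "fst (vs!j1) = fst (vs!j0) \<and> closed_segment (vs!j0) (vs!j1) \<subseteq> path_set vs"
  using assms
proof (induction j1)
  case 0 then show ?case using pt_in_path[of 0 vs] by simp
next
  case (Suc m)
  show ?case
  proof (cases "j0 = Suc m")
    case True then show ?thesis using pt_in_path[of "Suc m" vs] Suc.prems by simp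
  next
    case False
    then have m: "j0 \<le> m" "m < length vs" using Suc.prems by auto
    have pm: "\<forall>i. j0 \<le> i \<longrightarrow> i < m \<longrightarrow> fst (vs!i) = fst (vs!Suc i)" using Suc.prems(1) by simp
    have ih: "fst (vs!m) = fst (vs!j0)" "closed_segment (vs!j0) (vs!m) \<subseteq> path_set vs" using Suc.IH[OF pm m] by auto
    have sm: "fst (vs!Suc m) = fst (vs!m)" using Suc.prems(1) m by simp
    have s2: "closed_segment (vs!m) (vs!Suc m) \<subseteq> path_set vs" using seg_in_path[of m vs] Suc.prems by simp
    have "closed_segment (vs!j0) (vs!Suc m) \<subseteq> closed_segment (vs!j0) (vs!m) \<union> closed_segment (vs!m) (vs!Suc m)"
    proof
      fix z assume "z \<in> closed_segment (vs!j0) (vs!Suc m)"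
      then have "fst z = fst (vs!j0) \<and> min (snd (vs!j0)) (snd (vs!Suc m)) \<le> snd z \<and> snd z \<le> max (snd (vs!j0)) (snd (vs!Suc m))"
        using seg_v[of "vs!j0" "vs!Suc m" z] ih sm by simp
      then show "z \<in> closed_segment (vs!j0) (vs!m) \<union> closed_segment (vs!m) (vs!Suc m)"
        using seg_v[of "vs!j0" "vs!m" z] seg_v[of "vs!m" "vs!Suc m" z] ih sm
        unfolding min_def max_def by (auto split: if_splits)
    qed
    then show ?thesis using ih sm s2 by auto
  qed
qed

lemma L_cover:
  assumes "short_L_path p q vs"
  shows "(closed_segment p (fst q, snd p) \<union> closed_segment (fst q, snd p) q \<subseteq> path_set vs) \<or>
         (closed_segment p (fst p, snd q) \<union> closed_segment (fst p, snd q) q \<subseteq> path_set vs)"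
proof -
  have rp: "rpath p q vs" using assms unfolding short_L_path_def shortest_rpath_def by auto
  note ends = rpath_ends[OF rp]
  let ?n = "length vs"
  obtain j where j: "j < ?n" and
    c: "((\<forall>i<j. snd (vs!i) = snd (vs!Suc i)) \<and> (\<forall>i. j \<le> i \<longrightarrow> Suc i < ?n \<longrightarrow> fst (vs!i) = fst (vs!Suc i)))
     \<or> ((\<forall>i<j. fst (vs!i) = fst (vs!Suc i)) \<and> (\<forall>i. j \<le> i \<longrightarrow> Suc i < ?n \<longrightarrow> snd (vs!i) = snd (vs!Suc i)))"
    using path_shape[OF assms] by blast
  have nj: "j \<le> ?n - 1" using j by simp
  from c show ?thesis
  proof
    assume a: "(\<forall>i<j. snd (vs!i) = snd (vs!Suc i)) \<and> (\<forall>i. j \<le> i \<longrightarrow> Suc i < ?n \<longrightarrow> fst (vs!i) = fst (vs!Suc i))"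
    have c1: "snd (vs!j) = snd (vs!0) \<and> closed_segment (vs!0) (vs!j) \<subseteq> path_set vs"
      by (rule cover_h) (use a j in auto)
    have c2: "fst (vs!(?n-1)) = fst (vs!j) \<and> closed_segment (vs!j) (vs!(?n-1)) \<subseteq> path_set vs"
      by (rule cover_v) (use a nj ends(1) in auto)
    have "vs!j = (fst q, snd p)" using c1 c2 ends by (simp add: prod_eq_iff)
    then show ?thesis using c1 c2 ends by auto
  next
    assume a: "(\<forall>i<j. fst (vs!i) = fst (vs!Suc i)) \<and> (\<forall>i. j \<le> i \<longrightarrow> Suc i < ?n \<longrightarrow> snd (vs!i) = snd (vs!Suc i))"
    have c1: "fst (vs!j) = fst (vs!0) \<and> closed_segment (vs!0) (vs!j) \<subseteq> path_set vs"
      by (rule cover_v) (use a j in auto)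
    have c2: "snd (vs!(?n-1)) = snd (vs!j) \<and> closed_segment (vs!j) (vs!(?n-1)) \<subseteq> path_set vs"
      by (rule cover_h) (use a nj ends(1) in auto)
    have "vs!j = (fst p, snd q)" using c1 c2 ends by (simp add: prod_eq_iff)
    then show ?thesis using c1 c2 ends by auto
  qed
qed



lemma core2:
  fixes a b x1 Y1 x2 Y2 :: real
  assumes "\<not>(a<x1\<and>x1<b\<and>a<Y1\<and>Y1<b)" "\<not>(a<x2\<and>x2<b\<and>a<Y2\<and>Y2<b)"
  and "(a<Y1 \<and> Y1<b \<and> min x1 x2 < b \<and> a < max x1 x2) \<or> (a<x2\<and>x2<b \<and> min Y1 Y2 < b \<and> a < max Y1 Y2)"
  and "(a<x1\<and>x1<b \<and> min Y1 Y2<b \<and> a<max Y1 Y2) \<or> (a<Y2\<and>Y2<b \<and> min x1 x2 <b \<and> a < max x1 x2)"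
  shows "((a\<le>Y1\<and>Y1\<le>b \<and> min x1 x2 \<le> Y1 \<and> Y1 \<le> max x1 x2) \<or> (a\<le>x2\<and>x2\<le>b \<and> min Y1 Y2 \<le> x2 \<and> x2 \<le> max Y1 Y2))
       \<and> ((a\<le>x1\<and>x1\<le>b \<and> min Y1 Y2 \<le> x1 \<and> x1 \<le> max Y1 Y2) \<or> (a\<le>Y2\<and>Y2\<le>b \<and> min x1 x2 \<le> Y2 \<and> Y2 \<le> max x1 x2))"
  using assms unfolding min_def max_def by (auto split: if_splits)


lemma key:
  fixes a b c e :: real and \<phi> \<psi> :: "real \<Rightarrow> real" and D I :: "pt set" and p q :: pt
  assumes hA: "\<And>y. (c<y \<and> y<e) \<longleftrightarrow> (a < \<phi> y \<and> \<phi> y < b)"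
  and hB: "\<And>y. (c\<le>y \<and> y\<le>e) \<longleftrightarrow> (a \<le> \<phi> y \<and> \<phi> y \<le> b)"
  and hC1: "\<And>u v w. min u v \<le> w \<Longrightarrow> w \<le> max u v \<Longrightarrow> min (\<phi> u) (\<phi> v) \<le> \<phi> w \<and> \<phi> w \<le> max (\<phi> u) (\<phi> v)"
  and hC2: "\<And>u v w. min (\<phi> u) (\<phi> v) \<le> \<phi> w \<Longrightarrow> \<phi> w \<le> max (\<phi> u) (\<phi> v) \<Longrightarrow> min u v \<le> w \<and> w \<le> max u v"
  and hinv: "\<And>x. \<phi> (\<psi> x) = x"
  and hD: "\<And>y. c \<le> y \<Longrightarrow> y \<le> e \<Longrightarrow> (\<phi> y, y) \<in> D"
  and int: "\<And>z. z \<in> I \<longleftrightarrow> a < fst z \<and> fst z < b \<and> c < snd z \<and> snd z < e"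
  and p: "p \<notin> I" and q: "q \<notin> I"
  and M1: "(closed_segment p (fst q, snd p) \<union> closed_segment (fst q, snd p) q) \<inter> I \<noteq> {}"
  and M2: "(closed_segment p (fst p, snd q) \<union> closed_segment (fst p, snd q) q) \<inter> I \<noteq> {}"
  shows "(closed_segment p (fst q, snd p) \<union> closed_segment (fst q, snd p) q) \<inter> D \<noteq> {} \<and>
         (closed_segment p (fst p, snd q) \<union> closed_segment (fst p, snd q) q) \<inter> D \<noteq> {}"
proof -
  obtain px py where pp: "p = (px, py)" by fastforce
  obtain qx qy where qq: "q = (qx, qy)" by fastforce
  define Y1 where "Y1 = \<phi> py"
  define Y2 where "Y2 = \<phi> qy"
  have n1: "\<not>(a<px\<and>px<b\<and>a<Y1\<and>Y1<b)" using p int[of p] hA[of py] unfolding pp Y1_def by auto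
  have n2: "\<not>(a<qx\<and>qx<b\<and>a<Y2\<and>Y2<b)" using q int[of q] hA[of qy] unfolding qq Y2_def by auto
  have m1: "(a<Y1 \<and> Y1<b \<and> min px qx < b \<and> a < max px qx) \<or> (a<qx\<and>qx<b \<and> min Y1 Y2 < b \<and> a < max Y1 Y2)"
  proof -
    from M1 obtain z where z: "z \<in> I" "z \<in> closed_segment p (fst q, snd p) \<or> z \<in> closed_segment (fst q, snd p) q" by blast
    have zi: "a < fst z" "fst z < b" "c < snd z" "snd z < e" using z(1) int by auto
    from z(2) show ?thesis
    proof
      assume "z \<in> closed_segment p (fst q, snd p)"
      then have "snd z = py" "min px qx \<le> fst z" "fst z \<le> max px qx"
        using seg_h[of p "(fst q, snd p)" z] unfolding pp qq by auto
      then show ?thesis using zi hA[of py] unfolding Y1_def by auto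
    next
      assume "z \<in> closed_segment (fst q, snd p) q"
      then have "fst z = qx" "min py qy \<le> snd z" "snd z \<le> max py qy"
        using seg_v[of "(fst q, snd p)" q z] unfolding pp qq by auto
      moreover then have "min Y1 Y2 \<le> \<phi> (snd z) \<and> \<phi> (snd z) \<le> max Y1 Y2"
        using hC1 unfolding Y1_def Y2_def by blast
      moreover have "a < \<phi> (snd z) \<and> \<phi> (snd z) < b" using hA zi by blast
      ultimately show ?thesis using zi by linarith
    qed
  qed
  have m2: "(a<px\<and>px<b \<and> min Y1 Y2<b \<and> a<max Y1 Y2) \<or> (a<Y2\<and>Y2<b \<and> min px qx <b \<and> a < max px qx)"
  proof -
    from M2 obtain z where z: "z \<in> I" "z \<in> closed_segment p (fst p, snd q) \<or> z \<in> closed_segment (fst p, snd q) q" by blast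
    have zi: "a < fst z" "fst z < b" "c < snd z" "snd z < e" using z(1) int by auto
    from z(2) show ?thesis
    proof
      assume "z \<in> closed_segment p (fst p, snd q)"
      then have "fst z = px" "min py qy \<le> snd z" "snd z \<le> max py qy"
        using seg_v[of p "(fst p, snd q)" z] unfolding pp qq by auto
      moreover then have "min Y1 Y2 \<le> \<phi> (snd z) \<and> \<phi> (snd z) \<le> max Y1 Y2"
        using hC1 unfolding Y1_def Y2_def by blast
      moreover have "a < \<phi> (snd z) \<and> \<phi> (snd z) < b" using hA zi by blast
      ultimately show ?thesis using zi by linarith
    next
      assume "z \<in> closed_segment (fst p, snd q) q"
      then have "snd z = qy" "min px qx \<le> fst z" "fst z \<le> max px qx"
        using seg_h[of "(fst p, snd q)" q z] unfolding pp qq by auto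
      then show ?thesis using zi hA[of qy] unfolding Y2_def by auto
    qed
  qed
  have h: "((a\<le>Y1\<and>Y1\<le>b \<and> min px qx \<le> Y1 \<and> Y1 \<le> max px qx) \<or> (a\<le>qx\<and>qx\<le>b \<and> min Y1 Y2 \<le> qx \<and> qx \<le> max Y1 Y2))
       \<and> ((a\<le>px\<and>px\<le>b \<and> min Y1 Y2 \<le> px \<and> px \<le> max Y1 Y2) \<or> (a\<le>Y2\<and>Y2\<le>b \<and> min px qx \<le> Y2 \<and> Y2 \<le> max px qx))"
    by (rule core2[OF n1 n2 m1 m2])
  have inv: "min py qy \<le> \<psi> x \<and> \<psi> x \<le> max py qy" "c \<le> \<psi> x \<and> \<psi> x \<le> e"
    if "a \<le> x" "x \<le> b" "min Y1 Y2 \<le> x" "x \<le> max Y1 Y2" for x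
  proof -
    show "min py qy \<le> \<psi> x \<and> \<psi> x \<le> max py qy" using hC2[of py qy "\<psi> x"] that hinv[of x] unfolding Y1_def Y2_def by simp
    show "c \<le> \<psi> x \<and> \<psi> x \<le> e" using hB[of "\<psi> x"] that hinv[of x] by simp
  qed
  have g1: "(closed_segment p (fst q, snd p) \<union> closed_segment (fst q, snd p) q) \<inter> D \<noteq> {}"
  proof -
    from h have "(a\<le>Y1\<and>Y1\<le>b \<and> min px qx \<le> Y1 \<and> Y1 \<le> max px qx) \<or> (a\<le>qx\<and>qx\<le>b \<and> min Y1 Y2 \<le> qx \<and> qx \<le> max Y1 Y2)" by blast
    then show ?thesis
    proof
      assume A: "a\<le>Y1\<and>Y1\<le>b \<and> min px qx \<le> Y1 \<and> Y1 \<le> max px qx"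
      have "(Y1, py) \<in> D" using hD[of py] hB[of py] A unfolding Y1_def by auto
      moreover have "(Y1, py) \<in> closed_segment p (fst q, snd p)"
        using seg_h[of p "(fst q, snd p)" "(Y1, py)"] A unfolding pp qq by auto
      ultimately show ?thesis by blast
    next
      assume B: "a\<le>qx\<and>qx\<le>b \<and> min Y1 Y2 \<le> qx \<and> qx \<le> max Y1 Y2"
      have "(\<phi> (\<psi> qx), \<psi> qx) \<in> D" using hD[of "\<psi> qx"] inv[of qx] B by auto
      then have "(qx, \<psi> qx) \<in> D" using hinv by simp
      moreover have "(qx, \<psi> qx) \<in> closed_segment (fst q, snd p) q"
        using seg_v[of "(fst q, snd p)" q "(qx, \<psi> qx)"] inv[of qx] B unfolding pp qq by auto
      ultimately show ?thesis by blast
    qed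
  qed
  have g2: "(closed_segment p (fst p, snd q) \<union> closed_segment (fst p, snd q) q) \<inter> D \<noteq> {}"
  proof -
    from h have "(a\<le>px\<and>px\<le>b \<and> min Y1 Y2 \<le> px \<and> px \<le> max Y1 Y2) \<or> (a\<le>Y2\<and>Y2\<le>b \<and> min px qx \<le> Y2 \<and> Y2 \<le> max px qx)" by blast
    then show ?thesis
    proof
      assume B: "a\<le>px\<and>px\<le>b \<and> min Y1 Y2 \<le> px \<and> px \<le> max Y1 Y2"
      have "(\<phi> (\<psi> px), \<psi> px) \<in> D" using hD[of "\<psi> px"] inv[of px] B by auto
      then have "(px, \<psi> px) \<in> D" using hinv by simp
      moreover have "(px, \<psi> px) \<in> closed_segment p (fst p, snd q)"
        using seg_v[of p "(fst p, snd q)" "(px, \<psi> px)"] inv[of px] B unfolding pp qq by auto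
      ultimately show ?thesis by blast
    next
      assume A: "a\<le>Y2\<and>Y2\<le>b \<and> min px qx \<le> Y2 \<and> Y2 \<le> max px qx"
      have "(Y2, qy) \<in> D" using hD[of qy] hB[of qy] A unfolding Y2_def by auto
      moreover have "(Y2, qy) \<in> closed_segment (fst p, snd q) q"
        using seg_h[of "(fst p, snd q)" q "(Y2, qy)"] A unfolding pp qq by auto
      ultimately show ?thesis by blast
    qed
  qed
  show ?thesis using g1 g2 by blast
qed


definition good :: "real \<Rightarrow> real \<Rightarrow> real \<Rightarrow> real \<Rightarrow> (real \<Rightarrow> real) \<Rightarrow> (real \<Rightarrow> real) \<Rightarrow> pt set \<Rightarrow> bool" where
  "good a b c e \<phi> \<psi> D \<longleftrightarrow>
    (\<forall>y. (c<y \<and> y<e) \<longleftrightarrow> (a < \<phi> y \<and> \<phi> y < b)) \<and>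
    (\<forall>y. (c\<le>y \<and> y\<le>e) \<longleftrightarrow> (a \<le> \<phi> y \<and> \<phi> y \<le> b)) \<and>
    (\<forall>u v w. min u v \<le> w \<longrightarrow> w \<le> max u v \<longrightarrow> min (\<phi> u) (\<phi> v) \<le> \<phi> w \<and> \<phi> w \<le> max (\<phi> u) (\<phi> v)) \<and>
    (\<forall>u v w. min (\<phi> u) (\<phi> v) \<le> \<phi> w \<longrightarrow> \<phi> w \<le> max (\<phi> u) (\<phi> v) \<longrightarrow> min u v \<le> w \<and> w \<le> max u v) \<and>
    (\<forall>x. \<phi> (\<psi> x) = x) \<and>
    (\<forall>y. c \<le> y \<longrightarrow> y \<le> e \<longrightarrow> (\<phi> y, y) \<in> D)"

lemma good_mono:
  assumes m: "\<And>u v. (\<phi> u \<le> \<phi> v) = (u \<le> v)" and "\<phi> c = a" "\<phi> e = b"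
  and "\<forall>x. \<phi> (\<psi> x) = x" "\<forall>y. c \<le> y \<longrightarrow> y \<le> e \<longrightarrow> (\<phi> y, y) \<in> D"
  shows "good a b c e \<phi> \<psi> D"
proof -
  have ml: "(\<phi> u < \<phi> v) = (u < v)" for u v using m[of v u] by linarith
  show ?thesis unfolding good_def using assms(2-5)
    apply (intro conjI)
    apply (metis ml)
    apply (metis m)
    unfolding min_def max_def by (auto simp: m)
qed

lemma good_anti:
  assumes m: "\<And>u v. (\<phi> u \<le> \<phi> v) = (v \<le> u)" and "\<phi> e = a" "\<phi> c = b"
  and "\<forall>x. \<phi> (\<psi> x) = x" "\<forall>y. c \<le> y \<longrightarrow> y \<le> e \<longrightarrow> (\<phi> y, y) \<in> D"
  shows "good a b c e \<phi> \<psi> D"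
proof -
  have ml: "(\<phi> u < \<phi> v) = (v < u)" for u v using m[of v u] by linarith
  show ?thesis unfolding good_def using assms(2-5)
    apply (intro conjI)
    apply (metis ml)
    apply (metis m)
    unfolding min_def max_def by (auto simp: m)
qed

lemma good_main:
  assumes "a < b" "c < e"
  shows "good a b c e (\<lambda>y. a + (y - c) * ((b - a) / (e - c))) (\<lambda>x. c + (x - a) * ((e - c) / (b - a)))
           (closed_segment (a, c) (b, e))"
proof (rule good_mono)
  have k: "0 < (b - a) / (e - c)" using assms by simp
  show "(a + (u - c) * ((b - a) / (e - c)) \<le> a + (v - c) * ((b - a) / (e - c))) = (u \<le> v)" for u v
    by (subst add_le_cancel_left, subst mult_le_cancel_right_pos[OF k]) simp
  show "a + (c - c) * ((b - a) / (e - c)) = a" by simp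
  show "a + (e - c) * ((b - a) / (e - c)) = b" using assms by simp
  show "\<forall>x. a + (c + (x - a) * ((e - c) / (b - a)) - c) * ((b - a) / (e - c)) = x"
  proof
    fix x
    have nz: "(b - a) * (e - c) \<noteq> 0" using assms by simp
    have "((e - c) / (b - a)) * ((b - a) / (e - c)) = ((e - c) * (b - a)) / ((b - a) * (e - c))"
      by (simp only: times_divide_times_eq)
    also have "\<dots> = 1" using nz by (simp add: mult.commute)
    finally have h: "((e - c) / (b - a)) * ((b - a) / (e - c)) = 1" .
    have "(c + (x - a) * ((e - c) / (b - a)) - c) * ((b - a) / (e - c)) = (x - a) * (((e - c) / (b - a)) * ((b - a) / (e - c)))"
      by (simp only: add_diff_cancel_left' mult.assoc)
    then show "a + (c + (x - a) * ((e - c) / (b - a)) - c) * ((b - a) / (e - c)) = x" using h by simp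
  qed
  show "\<forall>y. c \<le> y \<longrightarrow> y \<le> e \<longrightarrow> (a + (y - c) * ((b - a) / (e - c)), y) \<in> closed_segment (a, c) (b, e)"
  proof (intro allI impI)
    fix y assume y: "c \<le> y" "y \<le> e"
    define u where "u = (y - c) / (e - c)"
    have u: "0 \<le> u" "u \<le> 1" using y assms unfolding u_def by (auto simp: divide_simps)
    have u0: "u * (e - c) = y - c" unfolding u_def using assms by simp
    have u1: "u * e - u * c = y - c" using u0 by (simp add: algebra_simps)
    have c0: "(y - c) * ((b - a) / (e - c)) = u * (b - a)" unfolding u_def by simp
    have c1: "(y - c) * ((b - a) / (e - c)) = u * b - u * a" using c0 by (simp add: right_diff_distrib)
    have "(a + (y - c) * ((b - a) / (e - c)), y) = (1 - u) *\<^sub>R (a, c) + u *\<^sub>R (b, e)"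
      using u1 c1 by (simp add: algebra_simps)
    then show "(a + (y - c) * ((b - a) / (e - c)), y) \<in> closed_segment (a, c) (b, e)"
      unfolding in_segment using u by blast
  qed
qed

lemma good_anti_diag:
  assumes "a < b" "c < e"
  shows "good a b c e (\<lambda>y. a + (e - y) * ((b - a) / (e - c))) (\<lambda>x. e - (x - a) * ((e - c) / (b - a)))
           (closed_segment (a, e) (b, c))"
proof (rule good_anti)
  have k: "0 < (b - a) / (e - c)" using assms by simp
  show "(a + (e - u) * ((b - a) / (e - c)) \<le> a + (e - v) * ((b - a) / (e - c))) = (v \<le> u)" for u v
    by (subst add_le_cancel_left, subst mult_le_cancel_right_pos[OF k]) simp
  show "a + (e - e) * ((b - a) / (e - c)) = a" by simp
  show "a + (e - c) * ((b - a) / (e - c)) = b" using assms by simp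
  show "\<forall>x. a + (e - (e - (x - a) * ((e - c) / (b - a)))) * ((b - a) / (e - c)) = x"
  proof
    fix x
    have nz: "(b - a) * (e - c) \<noteq> 0" using assms by simp
    have "((e - c) / (b - a)) * ((b - a) / (e - c)) = ((e - c) * (b - a)) / ((b - a) * (e - c))"
      by (simp only: times_divide_times_eq)
    also have "\<dots> = 1" using nz by (simp add: mult.commute)
    finally have h: "((e - c) / (b - a)) * ((b - a) / (e - c)) = 1" .
    have "(e - (e - (x - a) * ((e - c) / (b - a)))) * ((b - a) / (e - c)) = (x - a) * (((e - c) / (b - a)) * ((b - a) / (e - c)))"
      by (simp add: mult.assoc)
    then show "a + (e - (e - (x - a) * ((e - c) / (b - a)))) * ((b - a) / (e - c)) = x" using h by simp
  qed
  show "\<forall>y. c \<le> y \<longrightarrow> y \<le> e \<longrightarrow> (a + (e - y) * ((b - a) / (e - c)), y) \<in> closed_segment (a, e) (b, c)"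
  proof (intro allI impI)
    fix y assume y: "c \<le> y" "y \<le> e"
    define u where "u = (e - y) / (e - c)"
    have u: "0 \<le> u" "u \<le> 1" using y assms unfolding u_def by (auto simp: divide_simps)
    have u0: "u * (e - c) = e - y" unfolding u_def using assms by simp
    have u1: "u * e - u * c = e - y" using u0 by (simp add: algebra_simps)
    have c0: "(e - y) * ((b - a) / (e - c)) = u * (b - a)" unfolding u_def by simp
    have c1: "(e - y) * ((b - a) / (e - c)) = u * b - u * a" using c0 by (simp add: right_diff_distrib)
    have "(a + (e - y) * ((b - a) / (e - c)), y) = (1 - u) *\<^sub>R (a, e) + u *\<^sub>R (b, c)"
      using u1 c1 by (simp add: algebra_simps)
    then show "(a + (e - y) * ((b - a) / (e - c)), y) \<in> closed_segment (a, e) (b, c)"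
      unfolding in_segment using u by blast
  qed
qed


lemma skel_d:
  fixes a b c e :: real and d :: "pt \<times> pt"
  assumes ab: "a < b" and ce: "c < e" and g: "good a b c e \<phi> \<psi> (seg d)"
    and dsub: "seg d \<subseteq> rect a b c e"
  shows "skeleton (rect a b c e) {d}"
proof -
  let ?I = "interior (rect a b c e)"
  have int: "z \<in> ?I \<longleftrightarrow> a < fst z \<and> fst z < b \<and> c < snd z \<and> snd z < e" for z
    by (cases z) (simp add: int_rect)
  have gA: "\<And>y. (c<y \<and> y<e) \<longleftrightarrow> (a < \<phi> y \<and> \<phi> y < b)"
   and gB: "\<And>y. (c\<le>y \<and> y\<le>e) \<longleftrightarrow> (a \<le> \<phi> y \<and> \<phi> y \<le> b)"
   and gC1: "\<And>u v w. min u v \<le> w \<Longrightarrow> w \<le> max u v \<Longrightarrow> min (\<phi> u) (\<phi> v) \<le> \<phi> w \<and> \<phi> w \<le> max (\<phi> u) (\<phi> v)"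
   and gC2: "\<And>u v w. min (\<phi> u) (\<phi> v) \<le> \<phi> w \<Longrightarrow> \<phi> w \<le> max (\<phi> u) (\<phi> v) \<Longrightarrow> min u v \<le> w \<and> w \<le> max u v"
   and gi: "\<And>x. \<phi> (\<psi> x) = x"
   and gD: "\<And>y. c \<le> y \<Longrightarrow> y \<le> e \<Longrightarrow> (\<phi> y, y) \<in> seg d"
    using g unfolding good_def by blast+
  show ?thesis unfolding skeleton_def inside_def
  proof (intro conjI allI impI)
    show "(\<Union>s\<in>{d}. seg s) \<subseteq> rect a b c e" using dsub by simp
  next
    fix p q vs
    assume H: "p \<notin> ?I \<and> q \<notin> ?I \<and> (\<forall>vs. short_L_path p q vs \<longrightarrow> path_set vs \<inter> ?I \<noteq> {})"
      and vs: "short_L_path p q vs"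
    have M1: "(closed_segment p (fst q, snd p) \<union> closed_segment (fst q, snd p) q) \<inter> ?I \<noteq> {}"
      using H Lp_props[of "(fst q, snd p)" q p] by auto
    have M2: "(closed_segment p (fst p, snd q) \<union> closed_segment (fst p, snd q) q) \<inter> ?I \<noteq> {}"
      using H Lp_props[of "(fst p, snd q)" q p] by auto
    have K: "(closed_segment p (fst q, snd p) \<union> closed_segment (fst q, snd p) q) \<inter> seg d \<noteq> {} \<and>
         (closed_segment p (fst p, snd q) \<union> closed_segment (fst p, snd q) q) \<inter> seg d \<noteq> {}"
      by (rule key[OF gA gB gC1 gC2 gi gD int _ _ M1 M2])
         (use H in auto)
    show "\<exists>s\<in>{d}. path_set vs \<inter> seg s \<noteq> {}"
      using L_cover[OF vs] K by blast
  qed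
qed

lemma not_skel_empty:
  fixes a b c e :: real
  assumes ab: "a < b" and ce: "c < e"
  shows "\<not> skeleton (rect a b c e) {}"
proof
  assume sk: "skeleton (rect a b c e) {}"
  let ?I = "interior (rect a b c e)"
  have int: "z \<in> ?I \<longleftrightarrow> a < fst z \<and> fst z < b \<and> c < snd z \<and> snd z < e" for z
    by (cases z) (simp add: int_rect)
  define m where "m = (c + e) / 2"
  define p where "p = (a, m)"
  define q where "q = (b, m)"
  define z where "z = ((a + b) / 2, m)"
  have pI: "p \<notin> ?I" "q \<notin> ?I" using int unfolding p_def q_def by auto
  have zI: "z \<in> ?I" using int ab ce unfolding z_def m_def by auto
  have zs: "z \<in> closed_segment p q" using seg_h[of p q z] ab unfolding p_def q_def z_def by auto
  have allm: "path_set vs \<inter> ?I \<noteq> {}" if "short_L_path p q vs" for vs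
  proof -
    have k1: "(fst q, snd p) = q" "(fst p, snd q) = p" unfolding p_def q_def by auto
    have "closed_segment p q \<subseteq> path_set vs" using L_cover[OF that] unfolding k1 by auto
    then show ?thesis using zs zI by blast
  qed
  have ex: "short_L_path p q (Lp p (fst q, snd p) q)" by (rule Lp_props(1)) simp
  show False using sk pI allm ex unfolding skeleton_def by blast
qed

theorem corollary1:
  fixes a b c e :: real and d :: "pt \<times> pt"
  assumes "a < b" and "c < e"
    and "d \<in> {((a, c), (b, e)), ((a, e), (b, c))}"
  shows "minimum_skeleton (rect a b c e) {d}"
proof -
  have conv: "convex (rect a b c e)" unfolding rect_eq by (intro convex_Times convex_real_interval)
  have sk: "skeleton (rect a b c e) {d}"
  proof (cases "d = ((a, c), (b, e))")
    case True
    have sd: "seg d = closed_segment (a, c) (b, e)" unfolding True seg_def by simp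
    have ds: "seg d \<subseteq> rect a b c e" unfolding sd
      by (rule closed_segment_subset) (use assms conv in \<open>auto simp: rect_def\<close>)
    have "good a b c e (\<lambda>y. a + (y - c) * ((b - a) / (e - c))) (\<lambda>x. c + (x - a) * ((e - c) / (b - a))) (seg d)"
      unfolding sd by (rule good_main[OF assms(1,2)])
    then show ?thesis by (rule skel_d[OF assms(1,2) _ ds])
  next
    case False
    then have d: "d = ((a, e), (b, c))" using assms(3) by auto
    have sd: "seg d = closed_segment (a, e) (b, c)" unfolding d seg_def by simp
    have ds: "seg d \<subseteq> rect a b c e" unfolding sd
      by (rule closed_segment_subset) (use assms conv in \<open>auto simp: rect_def\<close>)
    have "good a b c e (\<lambda>y. a + (e - y) * ((b - a) / (e - c))) (\<lambda>x. e - (x - a) * ((e - c) / (b - a))) (seg d)"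
      unfolding sd by (rule good_anti_diag[OF assms(1,2)])
    then show ?thesis by (rule skel_d[OF assms(1,2) _ ds])
  qed
  have "card {d} \<le> card S'" if "finite S'" "skeleton (rect a b c e) S'" for S'
  proof -
    have "S' \<noteq> {}" using that(2) not_skel_empty[OF assms(1,2)] by metis
    then have "0 < card S'" using that(1) by (simp add: card_gt_0_iff)
    then show ?thesis by simp
  qed
  then show ?thesis unfolding minimum_skeleton_def using sk by blast
qed

end
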